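(* Let $m\ge2$, $n=2m+1$, $A_i$ ($i=2,\dots,m$) and $B$ as follows: $A_i=E_i+E_{m+i}+E_{i-1,n}+E_{m+i-1,n}$ for $2\le i\le m-1$, $A_m=E_m-E_{2m}+E_{m-1,n}+E_{2m-1,n}$, $B=I_{m+1}\oplus0_m$. Let $i\in\{1,\dots,m\}$ and let $(Y_1,\dots,Y_i)$ be a strict facial reduction sequence for $\mathcal S^n_+$ all of whose members lie in $\operatorname{lin}\{B,A_2,\dots,A_m\}$. Then $$\mathcal S^n_+\cap Y_1^\perp\cap\dots\cap Y_i^\perp=0_{m+i}\oplus\mathcal S^{m-i+1}_+ .$$
   Context: $E_{ij}\in\mathcal S^n$ has only nonzero entries $1$ in positions $(i,j),(j,i)$; $E_i:=E_{ii}$; orthogonality is with respect to $S\bullet T=\operatorname{trace}(ST)$. For a closed convex cone $K$, $K^*=\{y:\langle y,x\rangle\ge0\ \forall x\in K\}$. A facial reduction sequence for $K$ is $(y_1,\dots,y_k)$ such that, with $F_0=K$ and $F_j=F_{j-1}\cap y_j^\perp$, $y_j\in F_{j-1}^*$ for all $j$; it is strict if moreover $y_j\notin F_{j-1}^\perp$ for all $j$. $0_k\oplus\mathcal S^{l}_+$ denotes matrices whose first $k$ rows and columns are zero and whose lower right $l\times l$ block is positive semidefinite. *)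

theory Defs
  imports Complex_Main
begin

text \<open>Real n x n matrices are represented as functions nat => nat => real with
 1-based indices; S^n consists of the symmetric ones vanishing outside {1..n} x {1..n}.\<close>

type_synonym smat = "nat \<Rightarrow> nat \<Rightarrow> real"

definition Sym :: "nat \<Rightarrow> smat set" where
  "Sym n = {X. (\<forall>p q. X p q = X q p) \<and> (\<forall>p q. \<not>(1 \<le> p \<and> p \<le> n \<and> 1 \<le> q \<and> q \<le> n) \<longrightarrow> X p q = 0)}"

definition PSD :: "nat \<Rightarrow> smat set" where
  "PSD n = {X \<in> Sym n. \<forall>v::nat \<Rightarrow> real. (\<Sum>p=1..n. \<Sum>q=1..n. v p * X p q * v q) \<ge> 0}"

definition tip :: "nat \<Rightarrow> smat \<Rightarrow> smat \<Rightarrow> real" where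
  "tip n S T = (\<Sum>p=1..n. \<Sum>q=1..n. S p q * T q p)"

definition dual_cone :: "nat \<Rightarrow> smat set \<Rightarrow> smat set" where
  "dual_cone n K = {Y \<in> Sym n. \<forall>X\<in>K. tip n Y X \<ge> 0}"

definition orth :: "nat \<Rightarrow> smat set \<Rightarrow> smat set" where
  "orth n F = {Y \<in> Sym n. \<forall>X\<in>F. tip n Y X = 0}"

definition perp :: "nat \<Rightarrow> smat \<Rightarrow> smat set" where
  "perp n Y = {X \<in> Sym n. tip n Y X = 0}"

definition fr_face :: "nat \<Rightarrow> smat set \<Rightarrow> smat list \<Rightarrow> smat set" where
  "fr_face n K ys = fold (\<lambda>y F. F \<inter> perp n y) ys K"

definition strict_frs :: "nat \<Rightarrow> smat set \<Rightarrow> smat list \<Rightarrow> bool" where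
  "strict_frs n K ys = (\<forall>j < length ys.
      ys ! j \<in> dual_cone n (fr_face n K (take j ys)) \<and>
      ys ! j \<notin> orth n (fr_face n K (take j ys)))"

definition Emat :: "nat \<Rightarrow> nat \<Rightarrow> smat" where
  "Emat i j = (\<lambda>p q. if (p = i \<and> q = j) \<or> (p = j \<and> q = i) then 1 else 0)"

definition Amat :: "nat \<Rightarrow> nat \<Rightarrow> smat" where
  "Amat m i = (let n = 2*m+1 in
     if i = m then (\<lambda>p q. Emat m m p q - Emat (2*m) (2*m) p q + Emat (m-1) n p q + Emat (2*m-1) n p q)
     else (\<lambda>p q. Emat i i p q + Emat (m+i) (m+i) p q + Emat (i-1) n p q + Emat (m+i-1) n p q))"

definition Bmat :: "nat \<Rightarrow> smat" where
  "Bmat m = (\<lambda>p q. if p = q \<and> 1 \<le> p \<and> p \<le> m+1 then 1 else 0)"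

definition linBA :: "nat \<Rightarrow> smat set" where
  "linBA m = {Y. \<exists>b c. Y = (\<lambda>p q. b * Bmat m p q + (\<Sum>k=2..m. c k * Amat m k p q))}"

definition zero_oplus_psd :: "nat \<Rightarrow> nat \<Rightarrow> smat set" where
  "zero_oplus_psd k l = {X \<in> Sym (k+l). (\<forall>p q. p \<le> k \<or> q \<le> k \<longrightarrow> X p q = 0)
      \<and> (\<lambda>p q. X (k+p) (k+q)) \<in> PSD l}"

end

theory Submission
  imports Defs
begin

definition Hk :: "nat \<Rightarrow> nat \<Rightarrow> smat set" where
  "Hk n k = {X \<in> PSD n. \<forall>p q. p \<le> k \<or> q \<le> k \<longrightarrow> X p q = 0}"

lemma sum_one:
  assumes "finite A" "a \<in> A" "\<forall>r\<in>A. r \<noteq> a \<longrightarrow> f r = 0"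
  shows "sum f A = f a"
proof -
  have "sum f A = sum f {a}" by (rule sum.mono_neutral_right) (use assms in auto)
  thus ?thesis by simp
qed

lemma sum_two:
  assumes "finite A" "a \<in> A" "b \<in> A" "a \<noteq> b" "\<forall>r\<in>A. r \<noteq> a \<and> r \<noteq> b \<longrightarrow> f r = 0"
  shows "sum f A = f a + f b"
proof -
  have "sum f A = sum f {a,b}" by (rule sum.mono_neutral_right) (use assms in auto)
  thus ?thesis using assms(4) by simp
qed

lemma quad_two:
  fixes n a b :: nat and v :: "nat \<Rightarrow> real" and X :: smat
  assumes "a \<in> {1..n}" "b \<in> {1..n}" "a \<noteq> b" "\<forall>r. r \<noteq> a \<and> r \<noteq> b \<longrightarrow> v r = 0"
  shows "(\<Sum>p=1..n. \<Sum>q=1..n. v p * X p q * v q) =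
    v a * X a a * v a + v a * X a b * v b + v b * X b a * v a + v b * X b b * v b"
proof -
  have inner: "(\<Sum>q=1..n. v p * X p q * v q) = v p * X p a * v a + v p * X p b * v b" for p
    using assms by (intro sum_two[where f="\<lambda>q. v p * X p q * v q"]) auto
  have "(\<Sum>p=1..n. \<Sum>q=1..n. v p * X p q * v q) = (\<Sum>p=1..n. v p * X p a * v a + v p * X p b * v b)"
    using inner by simp
  also have "\<dots> = (v a * X a a * v a + v a * X a b * v b) + (v b * X b a * v a + v b * X b b * v b)"
    using assms by (intro sum_two[where f="\<lambda>p. v p * X p a * v a + v p * X p b * v b"]) auto
  finally show ?thesis by simp
qed

lemma quad_one:
  fixes n a :: nat and v :: "nat \<Rightarrow> real" and X :: smat
  assumes "a \<in> {1..n}" "\<forall>r. r \<noteq> a \<longrightarrow> v r = 0"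
  shows "(\<Sum>p=1..n. \<Sum>q=1..n. v p * X p q * v q) = v a * X a a * v a"
proof -
  have inner: "(\<Sum>q=1..n. v p * X p q * v q) = v p * X p a * v a" for p
    using assms by (intro sum_one[where f="\<lambda>q. v p * X p q * v q"]) auto
  have "(\<Sum>p=1..n. \<Sum>q=1..n. v p * X p q * v q) = (\<Sum>p=1..n. v p * X p a * v a)"
    using inner by simp
  also have "\<dots> = v a * X a a * v a"
    using assms by (intro sum_one[where f="\<lambda>p. v p * X p a * v a"]) auto
  finally show ?thesis by simp
qed

lemma lin_zero:
  assumes "\<forall>t::real. 0 \<le> 2*t*y + z" shows "y = 0"
proof (rule ccontr)
  assume "y \<noteq> 0"
  have "0 \<le> 2*(-(\<bar>z\<bar>+1)/(2*y))*y + z" using assms by blast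
  also have "\<dots> = z - (\<bar>z\<bar>+1)" using \<open>y\<noteq>0\<close> by (simp add: field_simps)
  finally show False by simp
qed

lemma Sym_sym: "X \<in> Sym n \<Longrightarrow> X p q = X q p" by (simp add: Sym_def)
lemma Sym_out: "X \<in> Sym n \<Longrightarrow> \<not>(1\<le>p\<and>p\<le>n\<and>1\<le>q\<and>q\<le>n) \<Longrightarrow> X p q = 0" by (simp add: Sym_def)

lemma psd_diag_zero:
  assumes "X \<in> PSD n" "1\<le>p" "p\<le>n" "X p p = 0" shows "X p q = 0"
proof (cases "1 \<le> q \<and> q \<le> n \<and> q \<noteq> p")
  case True
  define v where "v t = (\<lambda>r. if r = p then t else if r = q then 1 else (0::real))" for t
  have S: "X \<in> Sym n" using assms(1) by (simp add: PSD_def)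
  have "0 \<le> 2*t*X p q + X q q" for t
  proof -
    have "0 \<le> (\<Sum>a=1..n. \<Sum>b=1..n. v t a * X a b * v t b)" using assms(1) by (simp add: PSD_def)
    also have "\<dots> = v t p * X p p * v t p + v t p * X p q * v t q + v t q * X q p * v t p + v t q * X q q * v t q"
      by (rule quad_two) (use True assms in \<open>auto simp: v_def\<close>)
    also have "\<dots> = 2*t*X p q + X q q" using True assms Sym_sym[OF S, of q p] by (simp add: v_def)
    finally show ?thesis .
  qed
  thus ?thesis using lin_zero by blast
next
  case False then show ?thesis using assms by (auto simp: PSD_def Sym_def)
qed

lemma psd_diag_nonneg:
  assumes "X \<in> PSD n" "1\<le>p" "p\<le>n" shows "0 \<le> X p p"
proof -
  define v where "v = (\<lambda>r. if r = p then 1 else (0::real))"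
  have "0 \<le> (\<Sum>a=1..n. \<Sum>b=1..n. v a * X a b * v b)" using assms(1) by (simp add: PSD_def)
  also have "\<dots> = v p * X p p * v p" by (rule quad_one) (use assms in \<open>auto simp: v_def\<close>)
  finally show ?thesis by (simp add: v_def)
qed

lemma outer_Hk:
  fixes v :: "nat \<Rightarrow> real"
  assumes "\<forall>r. r \<le> k \<or> r > n \<longrightarrow> v r = 0"
  shows "(\<lambda>p q. v p * v q) \<in> Hk n k"
proof -
  have psd: "(\<Sum>p=1..n. \<Sum>q=1..n. w p * (v p * v q) * w q) \<ge> 0" for w :: "nat \<Rightarrow> real"
  proof -
    have "(\<Sum>p=1..n. \<Sum>q=1..n. w p * (v p * v q) * w q) = (\<Sum>p=1..n. w p * v p) * (\<Sum>q=1..n. w q * v q)"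
      by (simp add: sum_product mult_ac)
    thus ?thesis by simp
  qed
  have out: "v p * v q = 0" if "\<not>(1 \<le> p \<and> p \<le> n \<and> 1 \<le> q \<and> q \<le> n)" for p q
  proof -
    have "v p = 0 \<or> v q = 0" using assms that by (cases "p = 0"; cases "q = 0") auto
    thus ?thesis by auto
  qed
  have z: "v p * v q = 0" if "p \<le> k \<or> q \<le> k" for p q
    using assms that by auto
  have "(\<lambda>p q. v p * v q) \<in> Sym n" unfolding Sym_def using out by (auto simp: mult.commute)
  then have "(\<lambda>p q. v p * v q) \<in> PSD n" unfolding PSD_def using psd by blast
  then show ?thesis unfolding Hk_def using z by blast
qed

lemma tip_outer: "tip n Y (\<lambda>p q. v p * v q) = (\<Sum>p=1..n. \<Sum>q=1..n. v p * Y p q * v q)"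
  by (simp add: tip_def mult_ac)

lemma dual_test:
  assumes "Y \<in> dual_cone n (Hk n k)" "a \<in> {k+1..n}" "b \<in> {k+1..n}" "a \<noteq> b" "Y a a = 0"
  shows "Y a b = 0"
proof -
  have S: "Y \<in> Sym n" using assms(1) by (simp add: dual_cone_def)
  define v where "v t = (\<lambda>r. if r = a then t else if r = b then 1 else (0::real))" for t
  have "0 \<le> 2*t*Y a b + Y b b" for t
  proof -
    have "(\<lambda>p q. v t p * v t q) \<in> Hk n k" by (rule outer_Hk) (use assms in \<open>auto simp: v_def\<close>)
    then have "0 \<le> tip n Y (\<lambda>p q. v t p * v t q)" using assms(1) by (simp add: dual_cone_def)
    also have "\<dots> = (\<Sum>p=1..n. \<Sum>q=1..n. v t p * Y p q * v t q)" by (rule tip_outer)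
    also have "\<dots> = v t a * Y a a * v t a + v t a * Y a b * v t b + v t b * Y b a * v t a + v t b * Y b b * v t b"
      by (rule quad_two) (use assms in \<open>auto simp: v_def\<close>)
    also have "\<dots> = 2*t*Y a b + Y b b" using assms Sym_sym[OF S, of b a] by (simp add: v_def)
    finally show ?thesis .
  qed
  thus ?thesis using lin_zero by blast
qed

lemma Hk_0: "Hk n 0 = PSD n"
  unfolding Hk_def by (auto simp: PSD_def Sym_def)

lemma tip_zero_support:
  assumes "X \<in> Hk n k" "\<forall>p q. S p q \<noteq> 0 \<longrightarrow> min p q \<le> k"
  shows "tip n S X = 0"
proof -
  have "S p q * X q p = 0" for p q
    using assms unfolding Hk_def by (cases "S p q = 0") (auto simp: min_def split: if_splits)
  thus ?thesis unfolding tip_def by (intro sum.neutral ballI) simp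
qed

lemma tip_single_support:
  assumes "X \<in> Hk n k" "a \<in> {1..n}" "\<forall>p q. S p q \<noteq> 0 \<longrightarrow> (p = a \<and> q = a) \<or> min p q \<le> k"
  shows "tip n S X = S a a * X a a"
proof -
  have z: "S p q * X q p = 0" if "\<not>(p = a \<and> q = a)" for p q
    using assms that unfolding Hk_def by (cases "S p q = 0") (auto simp: min_def split: if_splits)
  have "tip n S X = (\<Sum>p=1..n. S p a * X a p)"
    unfolding tip_def by (rule sum.cong[OF refl], rule sum_one) (use assms z in auto)
  also have "\<dots> = S a a * X a a" by (rule sum_one) (use assms z in auto)
  finally show ?thesis .
qed

lemma tip_add: "tip n (\<lambda>p q. S p q + T p q) X = tip n S X + tip n T X"
  by (simp add: tip_def distrib_right sum.distrib)

lemma tip_smult: "tip n (\<lambda>p q. a * S p q) X = a * tip n S X"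
  by (simp add: tip_def sum_distrib_left mult.assoc)

lemma tip_sum: "tip n (\<lambda>p q. \<Sum>l\<in>L. A l p q) X = (\<Sum>l\<in>L. tip n (A l) X)"
proof -
  have "tip n (\<lambda>p q. \<Sum>l\<in>L. A l p q) X = (\<Sum>p=1..n. \<Sum>q=1..n. \<Sum>l\<in>L. A l p q * X q p)"
    unfolding tip_def by (simp only: sum_distrib_right)
  also have "\<dots> = (\<Sum>p=1..n. \<Sum>l\<in>L. \<Sum>q=1..n. A l p q * X q p)"
    by (rule sum.cong[OF refl], rule sum.swap)
  also have "\<dots> = (\<Sum>l\<in>L. \<Sum>p=1..n. \<Sum>q=1..n. A l p q * X q p)"
    by (rule sum.swap)
  finally show ?thesis unfolding tip_def .
qed

lemma tip_lin:
  "tip n (\<lambda>p q. b * B p q + (\<Sum>l\<in>L. c l * A l p q)) X = b * tip n B X + (\<Sum>l\<in>L. c l * tip n (A l) X)"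
  using tip_add[of n "\<lambda>p q. b * B p q" "\<lambda>p q. \<Sum>l\<in>L. c l * A l p q" X]
    tip_smult[of n b B X] tip_sum[of n "\<lambda>l p q. c l * A l p q" L X] tip_smult[of n "c _" "A _" X]
  by simp

lemma B_supp: "Bmat m p q \<noteq> 0 \<Longrightarrow> p = q \<and> p \<le> m+1"
  by (simp add: Bmat_def split: if_splits)

lemma E_supp: "Emat a b p q \<noteq> 0 \<Longrightarrow> (p = a \<and> q = b) \<or> (p = b \<and> q = a)"
  by (simp add: Emat_def split: if_splits)

lemma A_supp:
  assumes l: "2 \<le> l" "l \<le> m" and nz: "Amat m l p q \<noteq> 0"
  shows "(p = m+l \<and> q = m+l) \<or> min p q \<le> m+l-1"
proof -
  have "Emat l l p q \<noteq> 0 \<or> Emat (m+l) (m+l) p q \<noteq> 0 \<or> Emat (l-1) (2*m+1) p q \<noteq> 0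
      \<or> Emat (m+l-1) (2*m+1) p q \<noteq> 0"
  proof (cases "l = m")
    case True
    then have "Amat m l p q = Emat m m p q - Emat (2*m) (2*m) p q + Emat (m-1) (2*m+1) p q + Emat (2*m-1) (2*m+1) p q"
      by (simp add: Amat_def Let_def)
    then show ?thesis using nz True by (auto simp: mult_2)
  next
    case False
    then have "Amat m l p q = Emat l l p q + Emat (m+l) (m+l) p q + Emat (l-1) (2*m+1) p q + Emat (m+l-1) (2*m+1) p q"
      by (simp add: Amat_def Let_def)
    then show ?thesis using nz by auto
  qed
  then show ?thesis using l E_supp[of l l p q] E_supp[of "m+l" "m+l" p q]
      E_supp[of "l-1" "2*m+1" p q] E_supp[of "m+l-1" "2*m+1" p q] by (auto simp: min_def)
qed

lemma A_unf:
  assumes "2 \<le> l" "l \<le> m"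
  shows "Amat m l p q = Emat l l p q + (if l = m then -1 else 1) * Emat (m+l) (m+l) p q
     + Emat (l-1) (2*m+1) p q + Emat (m+l-1) (2*m+1) p q"
proof (cases "l = m")
  case True then show ?thesis by (simp add: Amat_def Let_def mult_2)
next
  case False then show ?thesis by (simp add: Amat_def Let_def)
qed

lemma A_diag: "2 \<le> l \<Longrightarrow> l \<le> m \<Longrightarrow> Amat m l (m+l) (m+l) = (if l = m then -1 else 1)"
  by (subst A_unf) (auto simp: Emat_def)

lemma A_NN: "2 \<le> l \<Longrightarrow> l \<le> m \<Longrightarrow> Amat m l (2*m+1) (2*m+1) = 0"
  by (subst A_unf) (auto simp: Emat_def)

lemma A_col: "2 \<le> k \<Longrightarrow> k \<le> m \<Longrightarrow> 2 \<le> l \<Longrightarrow> l \<le> m \<Longrightarrow>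
   Amat m k (m+l-1) (2*m+1) = (if k = l then 1 else 0)"
  by (subst A_unf) (auto simp: Emat_def)

lemmas A_NN' = A_NN[simplified]
lemmas A_col' = A_col[simplified]

lemma Y_NN:
  assumes "Y = (\<lambda>p q. b * Bmat m p q + (\<Sum>k=2..m. c k * Amat m k p q))" "m \<ge> 1"
  shows "Y (2*m+1) (2*m+1) = 0"
proof -
  have "(\<Sum>k=2..m. c k * Amat m k (2*m+1) (2*m+1)) = 0"
    by (rule sum.neutral) (auto simp: A_NN A_NN')
  moreover have "Bmat m (2*m+1) (2*m+1) = 0" using assms(2) by (simp add: Bmat_def)
  ultimately show ?thesis using assms by simp
qed

lemma Y_col:
  assumes "Y = (\<lambda>p q. b * Bmat m p q + (\<Sum>k=2..m. c k * Amat m k p q))" "2 \<le> l" "l \<le> m"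
  shows "Y (m+l-1) (2*m+1) = c l"
proof -
  have "(\<Sum>k=2..m. c k * Amat m k (m+l-1) (2*m+1)) = (\<Sum>k=2..m. if k = l then c k else 0)"
    by (rule sum.cong[OF refl]) (use assms in \<open>auto simp: A_col A_col'\<close>)
  also have "\<dots> = c l" using assms by simp
  finally have "(\<Sum>k=2..m. c k * Amat m k (m+l-1) (2*m+1)) = c l" .
  moreover have "Bmat m (m+l-1) (2*m+1) = 0" using assms by (simp add: Bmat_def)
  ultimately show ?thesis using assms(1) by simp
qed

lemma c_zero:
  assumes m2: "m \<ge> 2" and Yd: "Y = (\<lambda>p q. b * Bmat m p q + (\<Sum>k=2..m. c k * Amat m k p q))"
    and du: "Y \<in> dual_cone (2*m+1) (Hk (2*m+1) k)" and l: "2 \<le> l" "l \<le> m" "k < m+l-1"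
  shows "c l = 0"
proof -
  have S: "Y \<in> Sym (2*m+1)" using du by (simp add: dual_cone_def)
  have "Y (2*m+1) (m+l-1) = 0"
    by (rule dual_test[OF du]) (use l m2 Y_NN[OF Yd] in auto)
  then have "Y (m+l-1) (2*m+1) = 0" using Sym_sym[OF S] by metis
  thus ?thesis using Y_col[OF Yd l(1,2)] by simp
qed

lemma step_pos:
  fixes Y :: smat
  assumes m2: "m \<ge> 2" and j: "1 \<le> j" "j+1 \<le> m"
    and Yd: "Y = (\<lambda>p q. b * Bmat m p q + (\<Sum>k=2..m. c k * Amat m k p q))"
    and du: "Y \<in> dual_cone (2*m+1) (Hk (2*m+1) (m+j))"
    and nor: "Y \<notin> orth (2*m+1) (Hk (2*m+1) (m+j))"
  shows "Hk (2*m+1) (m+j) \<inter> perp (2*m+1) Y = Hk (2*m+1) (m+j+1)"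
proof -
  let ?N = "2*m+1"
  have cz: "c l = 0" if "j+2 \<le> l" "l \<le> m" for l
    by (rule c_zero[OF m2 Yd du]) (use that j in auto)
  define s where "s = (if j+1 = m then -1 else (1::real))"
  have tipY: "tip ?N Y X = c (j+1) * (s * X (m+j+1) (m+j+1))" if X: "X \<in> Hk ?N (m+j)" for X
  proof -
    have "tip ?N Y X = b * tip ?N (Bmat m) X + (\<Sum>l=2..m. c l * tip ?N (Amat m l) X)"
      unfolding Yd by (rule tip_lin)
    also have "tip ?N (Bmat m) X = 0"
    proof (rule tip_zero_support[OF X], intro allI impI)
      fix p q assume "Bmat m p q \<noteq> 0"
      from B_supp[OF this] j show "min p q \<le> m+j" by auto
    qed
    also have "(\<Sum>l=2..m. c l * tip ?N (Amat m l) X) = c (j+1) * tip ?N (Amat m (j+1)) X"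
    proof (rule sum_one[where f = "\<lambda>l. c l * tip ?N (Amat m l) X"])
      show "finite {2..m}" by simp
      show "j+1 \<in> {2..m}" using j by auto
      show "\<forall>r\<in>{2..m}. r \<noteq> j+1 \<longrightarrow> c r * tip ?N (Amat m r) X = 0"
      proof (intro ballI impI)
        fix r assume r: "r \<in> {2..m}" "r \<noteq> j+1"
        show "c r * tip ?N (Amat m r) X = 0"
        proof (cases "r \<le> j")
          case True
          have "tip ?N (Amat m r) X = 0"
          proof (rule tip_zero_support[OF X], intro allI impI)
            fix p q assume "Amat m r p q \<noteq> 0"
            from A_supp[OF _ _ this] r True show "min p q \<le> m+j" by auto
          qed
          thus ?thesis by simp
        next
          case False then show ?thesis using cz r by auto
        qed
      qed
    qed
    also have "tip ?N (Amat m (j+1)) X = Amat m (j+1) (m+(j+1)) (m+(j+1)) * X (m+(j+1)) (m+(j+1))"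
    proof (rule tip_single_support[OF X])
      show "m+(j+1) \<in> {1..?N}" using j by auto
      show "\<forall>p q. Amat m (j+1) p q \<noteq> 0 \<longrightarrow> (p = m+(j+1) \<and> q = m+(j+1)) \<or> min p q \<le> m+j"
        using A_supp[of "j+1" m] j by auto
    qed
    also have "Amat m (j+1) (m+(j+1)) (m+(j+1)) = s" using A_diag[of "j+1" m] j by (simp add: s_def)
    finally show ?thesis by simp
  qed
  have S: "Y \<in> Sym ?N" using du by (simp add: dual_cone_def)
  have cnz: "c (j+1) \<noteq> 0"
  proof
    assume "c (j+1) = 0"
    then have "\<forall>X\<in>Hk ?N (m+j). tip ?N Y X = 0" using tipY by simp
    then have "Y \<in> orth ?N (Hk ?N (m+j))" using S by (simp add: orth_def)
    with nor show False by simp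
  qed
  have s0: "s \<noteq> 0" by (simp add: s_def)
  let ?a = "m+j+1"
  show ?thesis
  proof (intro equalityI subsetI)
    fix X assume "X \<in> Hk ?N (m+j) \<inter> perp ?N Y"
    then have X: "X \<in> Hk ?N (m+j)" and t: "tip ?N Y X = 0" by (auto simp: perp_def)
    have aa: "X ?a ?a = 0" using tipY[OF X] t cnz s0 by simp
    have P: "X \<in> PSD ?N" using X by (simp add: Hk_def)
    have za: "X ?a q = 0" for q by (rule psd_diag_zero[OF P]) (use j aa in auto)
    have "X p q = 0" if pq: "p \<le> m+j+1 \<or> q \<le> m+j+1" for p q
    proof -
      consider "p \<le> m+j \<or> q \<le> m+j" | "p = ?a" | "q = ?a" using pq by linarith
      then show ?thesis
      proof cases
        case 1 then show ?thesis using X unfolding Hk_def by blast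
      next
        case 2 then show ?thesis using za by simp
      next
        case 3 then show ?thesis using za[of p] Sym_sym[of X ?N p q] P by (simp add: PSD_def)
      qed
    qed
    then show "X \<in> Hk ?N (m+j+1)" using P by (simp add: Hk_def)
  next
    fix X assume X1: "X \<in> Hk ?N (m+j+1)"
    then have X: "X \<in> Hk ?N (m+j)" by (simp add: Hk_def)
    have "X ?a ?a = 0" using X1 by (simp add: Hk_def)
    then have "tip ?N Y X = 0" using tipY[OF X] by simp
    moreover have "X \<in> Sym ?N" using X by (simp add: Hk_def PSD_def)
    ultimately show "X \<in> Hk ?N (m+j) \<inter> perp ?N Y" using X by (simp add: perp_def)
  qed
qed

lemma step_zero:
  fixes Y :: smat
  assumes m2: "m \<ge> 2"
    and Yd: "Y = (\<lambda>p q. b * Bmat m p q + (\<Sum>k=2..m. c k * Amat m k p q))"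
    and du: "Y \<in> dual_cone (2*m+1) (PSD (2*m+1))"
    and nor: "Y \<notin> orth (2*m+1) (PSD (2*m+1))"
  shows "PSD (2*m+1) \<inter> perp (2*m+1) Y = Hk (2*m+1) (m+1)"
proof -
  let ?N = "2*m+1"
  have du0: "Y \<in> dual_cone ?N (Hk ?N 0)" using du by (simp add: Hk_0)
  have cz: "c l = 0" if "2 \<le> l" "l \<le> m" for l
    by (rule c_zero[OF m2 Yd du0]) (use that in auto)
  have tipY: "tip ?N Y X = b * tip ?N (Bmat m) X" for X
  proof -
    have "tip ?N Y X = b * tip ?N (Bmat m) X + (\<Sum>l=2..m. c l * tip ?N (Amat m l) X)"
      unfolding Yd by (rule tip_lin)
    also have "(\<Sum>l=2..m. c l * tip ?N (Amat m l) X) = 0" using cz by (intro sum.neutral) auto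
    finally show ?thesis by simp
  qed
  have S: "Y \<in> Sym ?N" using du by (simp add: dual_cone_def)
  have bnz: "b \<noteq> 0"
  proof
    assume "b = 0"
    then have "Y \<in> orth ?N (PSD ?N)" using S tipY by (simp add: orth_def)
    with nor show False by simp
  qed
  have trB: "tip ?N (Bmat m) X = (\<Sum>p=1..?N. if p \<le> m+1 then X p p else 0)" for X
    unfolding tip_def
  proof (rule sum.cong[OF refl])
    fix p assume p: "p \<in> {1..?N}"
    have "(\<Sum>q=1..?N. Bmat m p q * X q p) = Bmat m p p * X p p"
      by (rule sum_one[where f="\<lambda>q. Bmat m p q * X q p"]) (use p in \<open>auto simp: Bmat_def\<close>)
    also have "\<dots> = (if p \<le> m+1 then X p p else 0)" using p by (simp add: Bmat_def)
    finally show "(\<Sum>q=1..?N. Bmat m p q * X q p) = (if p \<le> m+1 then X p p else 0)" .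
  qed
  show ?thesis
  proof (intro equalityI subsetI)
    fix X assume "X \<in> PSD ?N \<inter> perp ?N Y"
    then have P: "X \<in> PSD ?N" and t: "tip ?N Y X = 0" by (auto simp: perp_def)
    have t0: "(\<Sum>p=1..?N. if p \<le> m+1 then X p p else 0) = 0" using t tipY bnz trB by simp
    have nn: "\<forall>p\<in>{1..?N}. 0 \<le> (if p \<le> m+1 then X p p else 0)" using psd_diag_nonneg[OF P] by auto
    have all0: "\<forall>p\<in>{1..?N}. (if p \<le> m+1 then X p p else 0) = 0"
      using sum_nonneg_eq_0_iff[of "{1..?N}" "\<lambda>p. if p \<le> m+1 then X p p else 0"] nn t0 by simp
    have dz: "X p p = 0" if "1 \<le> p" "p \<le> m+1" for p
      using all0 that by (metis (full_types) atLeastAtMost_iff le_add1 le_trans mult_2 add_le_mono1 le_add2)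
    have S2: "X \<in> Sym ?N" using P by (simp add: PSD_def)
    have rz: "X p q = 0" if "1 \<le> p" "p \<le> m+1" for p q
      by (rule psd_diag_zero[OF P]) (use that dz in auto)
    have "X p q = 0" if pq: "p \<le> m+1 \<or> q \<le> m+1" for p q
    proof (cases "p = 0 \<or> q = 0")
      case True then show ?thesis using Sym_out[OF S2] by auto
    next
      case False
      then show ?thesis using pq rz[of p q] rz[of q p] Sym_sym[OF S2, of p q] by auto
    qed
    then show "X \<in> Hk ?N (m+1)" using P by (simp add: Hk_def)
  next
    fix X assume X: "X \<in> Hk ?N (m+1)"
    have "tip ?N (Bmat m) X = 0"
    proof (rule tip_zero_support[OF X], intro allI impI)
      fix p q assume "Bmat m p q \<noteq> 0"
      from B_supp[OF this] show "min p q \<le> m+1" by auto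
    qed
    then have "tip ?N Y X = 0" using tipY by simp
    moreover have "X \<in> PSD ?N" "X \<in> Sym ?N" using X by (auto simp: Hk_def PSD_def)
    ultimately show "X \<in> PSD ?N \<inter> perp ?N Y" by (simp add: perp_def)
  qed
qed

lemma shift_sum:
  fixes f :: "nat \<Rightarrow> real"
  assumes "k + l = n" "\<forall>p. p \<le> k \<longrightarrow> f p = 0"
  shows "(\<Sum>p=1..n. f p) = (\<Sum>p=1..l. f (k+p))"
proof -
  have "(\<Sum>p=1..l. f (k+p)) = (\<Sum>p=1+k..l+k. f p)"
    using sum.shift_bounds_cl_nat_ivl[of f 1 k l] by (simp add: add.commute)
  also have "\<dots> = (\<Sum>p=1..n. f p)" by (rule sum.mono_neutral_left) (use assms in auto)
  finally show ?thesis by simp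
qed

lemma quad_shift:
  fixes X :: smat and v :: "nat \<Rightarrow> real"
  assumes "k + l = n" "\<forall>p q. p \<le> k \<or> q \<le> k \<longrightarrow> X p q = 0"
  shows "(\<Sum>p=1..n. \<Sum>q=1..n. v p * X p q * v q) = (\<Sum>p=1..l. \<Sum>q=1..l. v (k+p) * X (k+p) (k+q) * v (k+q))"
proof -
  have "(\<Sum>p=1..n. \<Sum>q=1..n. v p * X p q * v q) = (\<Sum>p=1..l. \<Sum>q=1..n. v (k+p) * X (k+p) q * v q)"
    by (rule shift_sum[where f="\<lambda>p. \<Sum>q=1..n. v p * X p q * v q"]) (use assms in auto)
  also have "\<dots> = (\<Sum>p=1..l. \<Sum>q=1..l. v (k+p) * X (k+p) (k+q) * v (k+q))"
    by (rule sum.cong[OF refl], rule shift_sum) (use assms in auto)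
  finally show ?thesis .
qed

lemma G_char:
  assumes kl: "k + l = n"
  shows "zero_oplus_psd k l = Hk n k"
proof (intro equalityI subsetI)
  fix X assume X: "X \<in> zero_oplus_psd k l"
  have S: "X \<in> Sym n" and z: "\<forall>p q. p \<le> k \<or> q \<le> k \<longrightarrow> X p q = 0"
    and P: "(\<lambda>p q. X (k+p) (k+q)) \<in> PSD l"
    using X kl by (auto simp: zero_oplus_psd_def)
  have P': "\<forall>w::nat\<Rightarrow>real. 0 \<le> (\<Sum>p=1..l. \<Sum>q=1..l. w p * X (k+p) (k+q) * w q)"
    using P by (simp add: PSD_def)
  have "0 \<le> (\<Sum>p=1..n. \<Sum>q=1..n. v p * X p q * v q)" for v :: "nat \<Rightarrow> real"
  proof -
    have "0 \<le> (\<Sum>p=1..l. \<Sum>q=1..l. v (k+p) * X (k+p) (k+q) * v (k+q))"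
      using P'[rule_format, of "\<lambda>p. v (k+p)"] by simp
    also have "\<dots> = (\<Sum>p=1..n. \<Sum>q=1..n. v p * X p q * v q)"
      by (rule quad_shift[symmetric]) (use kl z in auto)
    finally show ?thesis .
  qed
  then show "X \<in> Hk n k" using S z by (simp add: Hk_def PSD_def)
next
  fix X assume X: "X \<in> Hk n k"
  have P: "X \<in> PSD n" and z: "\<forall>p q. p \<le> k \<or> q \<le> k \<longrightarrow> X p q = 0" using X by (auto simp: Hk_def)
  have S: "X \<in> Sym n" using P by (simp add: PSD_def)
  have S2: "(\<lambda>p q. X (k+p) (k+q)) \<in> Sym l"
    unfolding Sym_def
  proof (intro CollectI conjI allI impI)
    fix p q show "X (k+p) (k+q) = X (k+q) (k+p)" using Sym_sym[OF S] .
  next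
    fix p q assume a: "\<not> (1 \<le> p \<and> p \<le> l \<and> 1 \<le> q \<and> q \<le> l)"
    show "X (k+p) (k+q) = 0"
    proof (cases "p = 0 \<or> q = 0")
      case True then show ?thesis using z by auto
    next
      case False
      then have "k+p > n \<or> k+q > n" using a kl by auto
      then show ?thesis using Sym_out[OF S] by auto
    qed
  qed
  have "0 \<le> (\<Sum>p=1..l. \<Sum>q=1..l. w p * X (k+p) (k+q) * w q)" for w :: "nat \<Rightarrow> real"
  proof -
    have "0 \<le> (\<Sum>p=1..n. \<Sum>q=1..n. w (p-k) * X p q * w (q-k))" using P by (simp add: PSD_def)
    also have "\<dots> = (\<Sum>p=1..l. \<Sum>q=1..l. w (k+p-k) * X (k+p) (k+q) * w (k+q-k))"
      by (rule quad_shift) (use kl z in auto)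
    finally show ?thesis by simp
  qed
  then have "(\<lambda>p q. X (k+p) (k+q)) \<in> PSD l" using S2 by (simp add: PSD_def)
  then show "X \<in> zero_oplus_psd k l" using S z kl by (simp add: zero_oplus_psd_def)
qed

lemma fr_face_Suc:
  "j < length Ys \<Longrightarrow> fr_face n K (take (Suc j) Ys) = fr_face n K (take j Ys) \<inter> perp n (Ys!j)"
  by (simp add: fr_face_def take_Suc_conv_app_nth)

theorem claim2:
  fixes m i :: nat and Ys :: "smat list"
  assumes "m \<ge> 2" and "1 \<le> i" and "i \<le> m"
    and "length Ys = i"
    and "strict_frs (2*m+1) (PSD (2*m+1)) Ys"
    and "set Ys \<subseteq> linBA m"
  shows "fr_face (2*m+1) (PSD (2*m+1)) Ys = zero_oplus_psd (m+i) (m-i+1)"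
proof -
  let ?N = "2*m+1"
  have key: "1 \<le> j \<longrightarrow> j \<le> i \<longrightarrow> fr_face ?N (PSD ?N) (take j Ys) = Hk ?N (m+j)" for j
  proof (induction j)
    case 0 show ?case by simp
  next
    case (Suc j)
    show ?case
    proof (intro impI)
      assume ji: "Suc j \<le> i"
      then have jl: "j < length Ys" using assms(4) by simp
      have "Ys ! j \<in> linBA m" using assms(6) jl nth_mem by blast
      then obtain b c where Yd: "Ys ! j = (\<lambda>p q. b * Bmat m p q + (\<Sum>k=2..m. c k * Amat m k p q))"
        by (auto simp: linBA_def)
      have du: "Ys!j \<in> dual_cone ?N (fr_face ?N (PSD ?N) (take j Ys))"
        and nor: "Ys!j \<notin> orth ?N (fr_face ?N (PSD ?N) (take j Ys))"
        using assms(5) jl by (auto simp: strict_frs_def)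
      have ff: "fr_face ?N (PSD ?N) (take (Suc j) Ys) = fr_face ?N (PSD ?N) (take j Ys) \<inter> perp ?N (Ys!j)"
        by (rule fr_face_Suc[OF jl])
      show "fr_face ?N (PSD ?N) (take (Suc j) Ys) = Hk ?N (m + Suc j)"
      proof (cases "j = 0")
        case True
        have F0: "fr_face ?N (PSD ?N) (take j Ys) = PSD ?N" using True by (simp add: fr_face_def)
        have "PSD ?N \<inter> perp ?N (Ys!j) = Hk ?N (m+1)"
          by (rule step_zero[OF assms(1) Yd]) (use du nor F0 in auto)
        then show ?thesis using ff F0 True by simp
      next
        case False
        then have IH: "fr_face ?N (PSD ?N) (take j Ys) = Hk ?N (m+j)" using Suc.IH ji by simp
        have "Hk ?N (m+j) \<inter> perp ?N (Ys!j) = Hk ?N (m+j+1)"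
          by (rule step_pos[OF assms(1) _ _ Yd]) (use False ji assms(3) du nor IH in auto)
        then show ?thesis using ff IH by simp
      qed
    qed
  qed
  have "fr_face ?N (PSD ?N) Ys = Hk ?N (m+i)" using key[of i] assms by simp
  also have "Hk ?N (m+i) = zero_oplus_psd (m+i) (m-i+1)" by (rule G_char[symmetric]) (use assms in simp)
  finally show ?thesis .
qed

end
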